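(* Let $f:A\to B$ be a strict morphism in $\mathcal G$ (so $\ker f$ and $\operatorname{coker} f$ lie in $\mathcal G$). Then: (1) if $g:X\to A$ is a strict morphism with $f\circ g=0$, the induced map $\tilde g:X\to\ker f$ is a strict morphism; (2) if $h:B\to Y$ is a strict morphism with $h\circ f=0$, the induced map $\bar h:\operatorname{coker} f\to Y$ is a strict morphism. Consequently $\ker f$ and $\operatorname{coker} f$ are also a kernel and cokernel of $f$ in the category whose objects are those of $\mathcal G$ and whose morphisms are the strict morphisms.
   Context: Let $\Lambda$ be a finite dimensional algebra over a field and $\mathrm{mod}\text-\Lambda$ the category of finitely generated right $\Lambda$-modules. Fix a torsion class $\mathcal G\subseteq\mathrm{mod}\text-\Lambda$, i.e. a class of modules closed under isomorphisms, extensions and quotients. For $B\in\mathcal G$, a subobject of $B$ is a submodule of $B$ that lies in $\mathcal G$. A subobject $A\subseteq B$ is a strict subobject if $A\cap B'\in\mathcal G$ for every subobject $B'$ of $B$. A strict morphism is a module homomorphism $f:A\to B$ with $A,B\in\mathcal G$ such that $\ker f\in\mathcal G$, $\ker f$ is a strict subobject of $A$, and $\operatorname{im} f$ is a strict subobject of $B$. *)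

theory Defs
  imports Main
begin

text \<open>
  Right Lambda-modules are represented as submodules (carrier sets) of an ambient
  right Lambda-module on the additive group 'a, with right action act.
  Homomorphisms are functions of type 'a => 'a, only their behaviour on the
  domain carrier matters.
\<close>

definition fd_algebra :: "('k::field \<Rightarrow> 'l::ring_1) \<Rightarrow> bool" where
  "fd_algebra emb \<longleftrightarrow>
     emb 1 = 1 \<and> (\<forall>a b. emb (a + b) = emb a + emb b) \<and> (\<forall>a b. emb (a * b) = emb a * emb b)
     \<and> (\<forall>a l. emb a * l = l * emb a)
     \<and> (\<exists>Bs. finite Bs \<and> (\<forall>l. \<exists>c. l = (\<Sum>b\<in>Bs. emb (c b) * b)))"

definition right_module :: "('a::ab_group_add \<Rightarrow> 'l::ring_1 \<Rightarrow> 'a) \<Rightarrow> bool" where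
  "right_module act \<longleftrightarrow>
     (\<forall>x y l. act (x + y) l = act x l + act y l)
     \<and> (\<forall>x l m. act x (l + m) = act x l + act x m)
     \<and> (\<forall>x l m. act x (l * m) = act (act x l) m)
     \<and> (\<forall>x. act x 1 = x)"

definition submod :: "('a::ab_group_add \<Rightarrow> 'l::ring_1 \<Rightarrow> 'a) \<Rightarrow> 'a set \<Rightarrow> bool" where
  "submod act S \<longleftrightarrow> 0 \<in> S \<and> (\<forall>x\<in>S. \<forall>y\<in>S. x + y \<in> S) \<and> (\<forall>x\<in>S. \<forall>l. act x l \<in> S)"

definition fgmod :: "('a::ab_group_add \<Rightarrow> 'l::ring_1 \<Rightarrow> 'a) \<Rightarrow> 'a set \<Rightarrow> bool" where
  "fgmod act S \<longleftrightarrow> submod act S \<and>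
     (\<exists>F. finite F \<and> F \<subseteq> S \<and> S = {(\<Sum>x\<in>F. act x (c x)) | c. True})"

definition mhom :: "('a::ab_group_add \<Rightarrow> 'l::ring_1 \<Rightarrow> 'a) \<Rightarrow> ('a \<Rightarrow> 'a) \<Rightarrow> 'a set \<Rightarrow> 'a set \<Rightarrow> bool" where
  "mhom act f S T \<longleftrightarrow> (\<forall>x\<in>S. f x \<in> T) \<and> (\<forall>x\<in>S. \<forall>y\<in>S. f (x + y) = f x + f y)
     \<and> (\<forall>x\<in>S. \<forall>l. f (act x l) = act (f x) l)"

definition mker :: "('a \<Rightarrow> 'a::ab_group_add) \<Rightarrow> 'a set \<Rightarrow> 'a set" where
  "mker f S = {x\<in>S. f x = 0}"

definition torsion_class :: "('a::ab_group_add \<Rightarrow> 'l::ring_1 \<Rightarrow> 'a) \<Rightarrow> ('a set \<Rightarrow> bool) \<Rightarrow> bool" where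
  "torsion_class act G \<longleftrightarrow>
     (\<forall>S. G S \<longrightarrow> fgmod act S)
     \<and> (\<forall>S T f. G S \<and> fgmod act T \<and> mhom act f S T \<and> bij_betw f S T \<longrightarrow> G T)
     \<and> (\<forall>S T f. G S \<and> fgmod act T \<and> mhom act f S T \<and> f ` S = T \<longrightarrow> G T)
     \<and> (\<forall>L M N i p. G L \<and> G N \<and> fgmod act M \<and> mhom act i L M \<and> inj_on i L
          \<and> mhom act p M N \<and> p ` M = N \<and> i ` L = mker p M \<longrightarrow> G M)"

definition subobj :: "('a::ab_group_add \<Rightarrow> 'l::ring_1 \<Rightarrow> 'a) \<Rightarrow> ('a set \<Rightarrow> bool) \<Rightarrow> 'a set \<Rightarrow> 'a set \<Rightarrow> bool" where
  "subobj act G B A \<longleftrightarrow> A \<subseteq> B \<and> submod act A \<and> G A"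

definition strict_subobj :: "('a::ab_group_add \<Rightarrow> 'l::ring_1 \<Rightarrow> 'a) \<Rightarrow> ('a set \<Rightarrow> bool) \<Rightarrow> 'a set \<Rightarrow> 'a set \<Rightarrow> bool" where
  "strict_subobj act G B A \<longleftrightarrow> subobj act G B A \<and> (\<forall>B'. subobj act G B B' \<longrightarrow> G (A \<inter> B'))"

definition strict_morph :: "('a::ab_group_add \<Rightarrow> 'l::ring_1 \<Rightarrow> 'a) \<Rightarrow> ('a set \<Rightarrow> bool) \<Rightarrow> ('a \<Rightarrow> 'a) \<Rightarrow> 'a set \<Rightarrow> 'a set \<Rightarrow> bool" where
  "strict_morph act G f A B \<longleftrightarrow> G A \<and> G B \<and> mhom act f A B \<and> G (mker f A)
     \<and> strict_subobj act G A (mker f A) \<and> strict_subobj act G B (f ` A)"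

end

theory Submission
  imports Defs
begin

definition lc :: "('a::ab_group_add \<Rightarrow> 'l::ring_1 \<Rightarrow> 'a) \<Rightarrow> 'a set \<Rightarrow> 'a set" where
  "lc act F = {(\<Sum>x\<in>F. act x (c x)) | c. True}"

lemma lc_intro: "(\<Sum>x\<in>F. act x (c x)) \<in> lc act F"
  unfolding lc_def by blast

lemma fgmod_lc: "fgmod act S \<longleftrightarrow> submod act S \<and> (\<exists>F. finite F \<and> F \<subseteq> S \<and> S = lc act F)"
  unfolding fgmod_def lc_def by blast

lemma rm_act0: assumes "right_module act" shows "act 0 l = 0"
proof -
  have "act (0+0) l = act 0 l + act 0 l" using assms unfolding right_module_def by blast
  then show ?thesis by simp
qed

lemma rm_actx0: assumes "right_module act" shows "act x 0 = 0"
proof -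
  have "act x (0+0) = act x 0 + act x 0" using assms unfolding right_module_def by blast
  then show ?thesis by simp
qed

lemma rm_neg: assumes "right_module act" shows "act x (-1) = - x"
proof -
  have "act x (1 + -1) = act x 1 + act x (-1)" using assms unfolding right_module_def by blast
  moreover have "act x 1 = x" using assms unfolding right_module_def by blast
  ultimately have "x + act x (-1) = 0" using rm_actx0[OF assms] by simp
  then show ?thesis by (simp add: add_eq_0_iff)
qed

lemma submod_neg: assumes "right_module act" "submod act S" "x \<in> S" shows "- x \<in> S"
  using assms rm_neg[OF assms(1), of x] unfolding submod_def by metis

lemma submod_add: assumes "submod act S" "x \<in> S" "y \<in> S" shows "x + y \<in> S"
  using assms unfolding submod_def by blast

lemma submod_act: assumes "submod act S" "x \<in> S" shows "act x l \<in> S"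
  using assms unfolding submod_def by blast

lemma submod_0: assumes "submod act S" shows "0 \<in> S"
  using assms unfolding submod_def by blast

lemma submod_diff: assumes "right_module act" "submod act S" "x \<in> S" "y \<in> S" shows "x - y \<in> S"
  using submod_add[OF assms(2,3) submod_neg[OF assms(1,2,4)]] by simp

lemma submod_sum: assumes "submod act S" "\<And>i. i \<in> I \<Longrightarrow> g i \<in> S" shows "sum g I \<in> S"
  using assms(2)
proof (induction I rule: infinite_finite_induct)
  case (infinite A) then show ?case using submod_0[OF assms(1)] by simp
next
  case empty then show ?case using submod_0[OF assms(1)] by simp
next
  case (insert x F) then show ?case using submod_add[OF assms(1)] by simp
qed

lemma mhom_0: assumes "mhom act p S T" "submod act S" shows "p 0 = 0"
proof -
  have "p (0+0) = p 0 + p 0" using assms submod_0[OF assms(2)] unfolding mhom_def by blast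
  then show ?thesis by simp
qed

lemma mhom_add: assumes "mhom act p S T" "x \<in> S" "y \<in> S" shows "p (x + y) = p x + p y"
  using assms unfolding mhom_def by blast

lemma mhom_act: assumes "mhom act p S T" "x \<in> S" shows "p (act x l) = act (p x) l"
  using assms unfolding mhom_def by blast

lemma mhom_into: assumes "mhom act p S T" "x \<in> S" shows "p x \<in> T"
  using assms unfolding mhom_def by blast

lemma mhom_diff: assumes "right_module act" "mhom act p S T" "submod act S" "x \<in> S" "y \<in> S"
  shows "p (x - y) = p x - p y"
proof -
  have "x - y \<in> S" using submod_diff assms by blast
  have "p (x - y + y) = p (x - y) + p y" using mhom_add[OF assms(2) \<open>x - y \<in> S\<close> assms(5)] .
  then show ?thesis by simp
qed

lemma mhom_sum: assumes "mhom act p S T" "submod act S" "\<And>i. i \<in> I \<Longrightarrow> g i \<in> S"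
  shows "p (sum g I) = (\<Sum>i\<in>I. p (g i))"
  using assms(3)
proof (induction I rule: infinite_finite_induct)
  case (infinite A) then show ?case using mhom_0[OF assms(1,2)] by simp
next
  case empty then show ?case using mhom_0[OF assms(1,2)] by simp
next
  case (insert x F)
  have "sum g F \<in> S" using submod_sum[OF assms(2)] insert by blast
  then show ?case using insert mhom_add[OF assms(1)] by simp
qed

lemma act_sum: assumes "right_module act" shows "act (sum g I) l = (\<Sum>i\<in>I. act (g i) l)"
proof (induction I rule: infinite_finite_induct)
  case (infinite A) then show ?case using rm_act0[OF assms] by simp
next
  case empty then show ?case using rm_act0[OF assms] by simp
next
  case (insert x F)
  then show ?case using assms unfolding right_module_def by simp
qed

lemma lc_submod: assumes "right_module act" shows "submod act (lc act F)"
  unfolding submod_def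
proof (intro conjI ballI allI)
  have "(\<Sum>x\<in>F. act x ((\<lambda>_. 0) x)) \<in> lc act F" by (rule lc_intro)
  then show "0 \<in> lc act F" using rm_actx0[OF assms] by simp
next
  fix x y assume "x \<in> lc act F" "y \<in> lc act F"
  then obtain c d where x: "x = (\<Sum>z\<in>F. act z (c z))" and y: "y = (\<Sum>z\<in>F. act z (d z))"
    unfolding lc_def by blast
  have "(\<Sum>z\<in>F. act z (c z + d z)) = x + y"
    unfolding x y sum.distrib[symmetric] using assms unfolding right_module_def by simp
  then show "x + y \<in> lc act F" using lc_intro[of act "\<lambda>z. c z + d z" F] by simp
next
  fix x l assume "x \<in> lc act F"
  then obtain c where x: "x = (\<Sum>z\<in>F. act z (c z))" unfolding lc_def by blast
  have "(\<Sum>z\<in>F. act z (c z * l)) = act x l"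
    unfolding x act_sum[OF assms] using assms unfolding right_module_def by simp
  then show "act x l \<in> lc act F" using lc_intro[of act "\<lambda>z. c z * l" F] by simp
qed

lemma lc_sub: assumes "submod act S" "F \<subseteq> S" shows "lc act F \<subseteq> S"
proof
  fix x assume "x \<in> lc act F"
  then obtain c where x: "x = (\<Sum>z\<in>F. act z (c z))" unfolding lc_def by blast
  show "x \<in> S" unfolding x
    by (rule submod_sum[OF assms(1)]) (use assms submod_act in blast)
qed

lemma lc_base: assumes "right_module act" "finite F" "x \<in> F" shows "x \<in> lc act F"
proof -
  have "(\<Sum>y\<in>F. act y (if y = x then 1 else 0)) = (\<Sum>y\<in>F. if y = x then x else 0)"
    by (rule sum.cong) (use assms rm_actx0[OF assms(1)] in \<open>auto simp: right_module_def\<close>)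
  also have "\<dots> = x" using assms by simp
  finally show ?thesis using lc_intro[of act "\<lambda>y. if y = x then 1 else 0" F] by simp
qed

lemma fgmod_image: assumes rm: "right_module act" and "fgmod act S" "mhom act p S T"
  shows "fgmod act (p ` S)"
proof -
  have sS: "submod act S" using assms(2) unfolding fgmod_def by blast
  then obtain F where F: "finite F" "F \<subseteq> S" "S = lc act F" using assms(2) unfolding fgmod_lc by blast
  have sp: "submod act (p ` S)" unfolding submod_def
  proof (intro conjI ballI allI)
    show "0 \<in> p ` S" using mhom_0[OF assms(3) sS] submod_0[OF sS] by force
  next
    fix x y assume "x \<in> p ` S" "y \<in> p ` S"
    then obtain a b where "a \<in> S" "b \<in> S" "x = p a" "y = p b" by blast
    then show "x + y \<in> p ` S" using mhom_add[OF assms(3)] submod_add[OF sS] by (metis image_eqI)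
  next
    fix x l assume "x \<in> p ` S"
    then obtain a where "a \<in> S" "x = p a" by blast
    then show "act x l \<in> p ` S" using mhom_act[OF assms(3)] submod_act[OF sS] by (metis image_eqI)
  qed
  have "p ` S = lc act (p ` F)"
  proof
    show "lc act (p ` F) \<subseteq> p ` S" using lc_sub[OF sp] F by blast
  next
    show "p ` S \<subseteq> lc act (p ` F)"
    proof
      fix y assume "y \<in> p ` S"
      then obtain x where "x \<in> S" "y = p x" by blast
      then obtain c where x: "x = (\<Sum>z\<in>F. act z (c z))" using F unfolding lc_def by blast
      have "y = (\<Sum>z\<in>F. p (act z (c z)))" unfolding \<open>y = p x\<close> x
        by (rule mhom_sum[OF assms(3) sS]) (use F submod_act[OF sS] in blast)
      also have "\<dots> = (\<Sum>z\<in>F. act (p z) (c z))"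
        by (rule sum.cong) (use F mhom_act[OF assms(3)] in blast)+
      also have "\<dots> \<in> lc act (p ` F)"
        by (rule submod_sum[OF lc_submod[OF rm]])
          (use F lc_base[OF rm] submod_act[OF lc_submod[OF rm]] in blast)
      finally show "y \<in> lc act (p ` F)" .
    qed
  qed
  then show ?thesis unfolding fgmod_lc using sp F by blast
qed


lemma strict_subobj_self: assumes "G C" "submod act C" shows "strict_subobj act G C C"
proof -
  have "\<And>B'. subobj act G C B' \<Longrightarrow> C \<inter> B' = B'" unfolding subobj_def by blast
  then show ?thesis using assms unfolding strict_subobj_def subobj_def by auto
qed

lemma preimage_submod: assumes rm: "right_module act" and "mhom act p B C" "submod act B" "submod act B'"
  shows "submod act {x\<in>B. p x \<in> B'}"
  unfolding submod_def
proof (intro conjI ballI allI)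
  show "0 \<in> {x \<in> B. p x \<in> B'}" using mhom_0[OF assms(2,3)] submod_0[OF assms(3)] submod_0[OF assms(4)] by simp
next
  fix x y assume "x \<in> {x \<in> B. p x \<in> B'}" "y \<in> {x \<in> B. p x \<in> B'}"
  then show "x + y \<in> {x \<in> B. p x \<in> B'}"
    using mhom_add[OF assms(2)] submod_add[OF assms(3)] submod_add[OF assms(4)] by auto
next
  fix x l assume "x \<in> {x \<in> B. p x \<in> B'}"
  then show "act x l \<in> {x \<in> B. p x \<in> B'}"
    using mhom_act[OF assms(2)] submod_act[OF assms(3)] submod_act[OF assms(4)] by auto
qed

lemma extension_fg: assumes rm: "right_module act"
  and fgN: "fgmod act N" and fgL: "fgmod act L" and sB: "submod act B"
  and hp: "mhom act p B C" and NC: "N \<subseteq> p ` B" and LB: "L = mker p B"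
  shows "fgmod act {x\<in>B. p x \<in> N}"
proof -
  let ?M = "{x\<in>B. p x \<in> N}"
  have sN: "submod act N" using fgN unfolding fgmod_def by blast
  have sM: "submod act ?M" by (rule preimage_submod[OF rm hp sB sN])
  obtain FN where FN: "finite FN" "FN \<subseteq> N" "N = lc act FN" using fgN unfolding fgmod_lc by blast
  obtain FL where FL: "finite FL" "FL \<subseteq> L" "L = lc act FL" using fgL unfolding fgmod_lc by blast
  define s where "s y = (SOME x. x \<in> B \<and> p x = y)" for y
  have s: "s y \<in> B \<and> p (s y) = y" if yN: "y \<in> N" for y
  proof -
    obtain x where "x \<in> B" "p x = y" using NC yN by blast
    then show ?thesis unfolding s_def by (rule someI[where P="\<lambda>x. x \<in> B \<and> p x = y", OF conjI])
  qed
  define F where "F = s ` FN \<union> FL"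
  have finF: "finite F" unfolding F_def using FN FL by blast
  have LM: "L \<subseteq> ?M" using LB submod_0[OF sN] unfolding mker_def by auto
  have FM: "F \<subseteq> ?M" unfolding F_def using s FN FL LM by auto
  have sl: "submod act (lc act F)" by (rule lc_submod[OF rm])
  have "?M = lc act F"
  proof
    show "lc act F \<subseteq> ?M" by (rule lc_sub[OF sM FM])
  next
    show "?M \<subseteq> lc act F"
    proof
      fix z assume z: "z \<in> ?M"
      then obtain c where pz: "p z = (\<Sum>y\<in>FN. act y (c y))" using FN unfolding lc_def by blast
      define w where "w = (\<Sum>y\<in>FN. act (s y) (c y))"
      have wB: "w \<in> B" unfolding w_def
        by (rule submod_sum[OF sB]) (use s FN submod_act[OF sB] in blast)
      have "p w = (\<Sum>y\<in>FN. p (act (s y) (c y)))" unfolding w_def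
        by (rule mhom_sum[OF hp sB]) (use s FN submod_act[OF sB] in blast)
      also have "\<dots> = (\<Sum>y\<in>FN. act y (c y))"
        by (rule sum.cong) (use s FN mhom_act[OF hp] in auto)
      finally have pw: "p w = p z" using pz by simp
      have "z - w \<in> L" unfolding LB mker_def
        using z wB submod_diff[OF rm sB] mhom_diff[OF rm hp sB] pw by auto
      then have zwl: "z - w \<in> lc act F" using FL lc_sub[OF sl, of FL] F_def finF lc_base[OF rm finF] by blast
      have wl: "w \<in> lc act F" unfolding w_def
        by (rule submod_sum[OF sl]) (use FN F_def finF lc_base[OF rm finF] submod_act[OF sl] in blast)
      have "z = (z - w) + w" by simp
      then show "z \<in> lc act F" using submod_add[OF sl zwl wl] by simp
    qed
  qed
  then show ?thesis unfolding fgmod_lc using sM finF FM by blast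
qed

theorem mainTheorem6:
  fixes emb :: "'k::field \<Rightarrow> 'l::ring_1"
    and act :: "'a::ab_group_add \<Rightarrow> 'l \<Rightarrow> 'a"
    and G :: "'a set \<Rightarrow> bool"
    and f :: "'a \<Rightarrow> 'a" and A B :: "'a set"
  assumes "fd_algebra emb"
    and "right_module act"
    and "torsion_class act G"
    and "strict_morph act G f A B"
  shows
    "G (mker f A)
     \<and> strict_morph act G (\<lambda>x. x) (mker f A) A
     \<and> (\<forall>g X. strict_morph act G g X A \<and> (\<forall>x\<in>X. f (g x) = 0)
          \<longrightarrow> strict_morph act G g X (mker f A))
     \<and> (\<forall>C p. fgmod act C \<and> mhom act p B C \<and> p ` B = C \<and> mker p B = f ` A
          \<longrightarrow> G C \<and> strict_morph act G p B C
            \<and> (\<forall>h Y. strict_morph act G h B Y \<and> (\<forall>x\<in>A. h (f x) = 0)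
                 \<longrightarrow> (\<exists>hb. strict_morph act G hb C Y \<and> (\<forall>x\<in>B. hb (p x) = h x)
                        \<and> (\<forall>hb'. (\<forall>x\<in>B. hb' (p x) = h x) \<longrightarrow> (\<forall>y\<in>C. hb' y = hb y)))))"
proof -
  note rm = assms(2)
  have tc1: "\<forall>S. G S \<longrightarrow> fgmod act S"
    and tc3: "\<forall>S T f. G S \<and> fgmod act T \<and> mhom act f S T \<and> f ` S = T \<longrightarrow> G T"
    and tc4: "\<forall>L M N i p. G L \<and> G N \<and> fgmod act M \<and> mhom act i L M \<and> inj_on i L
          \<and> mhom act p M N \<and> p ` M = N \<and> i ` L = mker p M \<longrightarrow> G M"
    using assms(3)[unfolded torsion_class_def] 
    apply -
    apply (erule conjunct1)
    apply (erule conjunct1[OF conjunct2[OF conjunct2]])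
    apply (erule conjunct2[OF conjunct2[OF conjunct2]])
    done
  have tcG: "\<And>S. G S \<Longrightarrow> fgmod act S" using tc1 by blast
  have tcQ: "\<And>S T f. G S \<Longrightarrow> fgmod act T \<Longrightarrow> mhom act f S T \<Longrightarrow> f ` S = T \<Longrightarrow> G T"
    by (rule tc3[rule_format]) (intro conjI; assumption)
  have tcE: "\<And>L M N i p. G L \<Longrightarrow> G N \<Longrightarrow> fgmod act M \<Longrightarrow> mhom act i L M \<Longrightarrow> inj_on i L
      \<Longrightarrow> mhom act p M N \<Longrightarrow> p ` M = N \<Longrightarrow> i ` L = mker p M \<Longrightarrow> G M"
    by (rule tc4[rule_format]) (intro conjI; assumption)
  have sm: "\<And>S. G S \<Longrightarrow> submod act S" using tcG unfolding fgmod_def by blast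
  have GQ: "\<And>S T p. G S \<Longrightarrow> mhom act p S T \<Longrightarrow> G (p ` S)"
  proof -
    fix S T p assume "G S" "mhom act p S T"
    then have "mhom act p S (p ` S)" unfolding mhom_def by blast
    then show "G (p ` S)" using tcQ[OF \<open>G S\<close>] fgmod_image[OF rm tcG[OF \<open>G S\<close>]] by blast
  qed
  from assms(4) have GA: "G A" and GB: "G B" and hf: "mhom act f A B" and GK: "G (mker f A)"
    and sK: "strict_subobj act G A (mker f A)" and sI: "strict_subobj act G B (f ` A)"
    unfolding strict_morph_def by auto
  have G0: "G {0}"
  proof -
    have "mhom act (\<lambda>_. 0) A {0}" unfolding mhom_def using rm_act0[OF rm] by simp
    moreover have "(\<lambda>_. 0) ` A = {0}" using submod_0[OF sm[OF GA]] by blast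
    ultimately show ?thesis using GQ[OF GA] by metis
  qed
  have mk0: "\<And>S. G S \<Longrightarrow> mker (\<lambda>x. x) S = {0}" using submod_0 sm unfolding mker_def by blast
  have s0: "\<And>S. G S \<Longrightarrow> strict_subobj act G S {0}"
  proof -
    fix S assume "G S"
    have "\<And>B'. subobj act G S B' \<Longrightarrow> {0} \<inter> B' = {0}" unfolding subobj_def using submod_0 by blast
    then show "strict_subobj act G S {0}" unfolding strict_subobj_def subobj_def
      using G0 sm[OF G0] submod_0[OF sm[OF \<open>G S\<close>]] by auto
  qed
  have P2: "strict_morph act G (\<lambda>x. x) (mker f A) A"
    unfolding strict_morph_def using GK GA mk0[OF GK] G0 s0[OF GK] sK
    by (auto simp: mhom_def mker_def)
  have P3: "strict_morph act G g X (mker f A)"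
    if g: "strict_morph act G g X A" "\<forall>x\<in>X. f (g x) = 0" for g X
  proof -
    from g(1) have GX: "G X" and hg: "mhom act g X A" and GKg: "G (mker g X)"
      and sKg: "strict_subobj act G X (mker g X)" and sIg: "strict_subobj act G A (g ` X)"
      unfolding strict_morph_def by auto
    have hg': "mhom act g X (mker f A)" using hg g(2) unfolding mhom_def mker_def by auto
    have "strict_subobj act G (mker f A) (g ` X)"
      using sIg hg' unfolding strict_subobj_def subobj_def mhom_def mker_def by auto
    then show ?thesis unfolding strict_morph_def using GX GK hg' GKg sKg by auto
  qed
  have P4: "G C \<and> strict_morph act G p B C
            \<and> (\<forall>h Y. strict_morph act G h B Y \<and> (\<forall>x\<in>A. h (f x) = 0)
                 \<longrightarrow> (\<exists>hb. strict_morph act G hb C Y \<and> (\<forall>x\<in>B. hb (p x) = h x)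
                        \<and> (\<forall>hb'. (\<forall>x\<in>B. hb' (p x) = h x) \<longrightarrow> (\<forall>y\<in>C. hb' y = hb y))))"
    if C: "fgmod act C" "mhom act p B C" "p ` B = C" "mker p B = f ` A" for C p
  proof -
    have sB: "submod act B" using sm[OF GB] .
    have GC: "G C" using tcQ[OF GB C(1,2,3)] .
    have GI: "G (f ` A)" using sI unfolding strict_subobj_def subobj_def by blast
    have sC: "submod act C" using sm[OF GC] .
    have smp: "strict_morph act G p B C" unfolding strict_morph_def
      using GB GC C GI sI strict_subobj_self[of G C act, OF GC sC] by simp
    have rest: "\<exists>hb. strict_morph act G hb C Y \<and> (\<forall>x\<in>B. hb (p x) = h x)
                        \<and> (\<forall>hb'. (\<forall>x\<in>B. hb' (p x) = h x) \<longrightarrow> (\<forall>y\<in>C. hb' y = hb y))"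
      if h: "strict_morph act G h B Y" "\<forall>x\<in>A. h (f x) = 0" for h Y
    proof -
      from h(1) have GY: "G Y" and hh: "mhom act h B Y" and GKh: "G (mker h B)"
        and sKh: "strict_subobj act G B (mker h B)" and sIh: "strict_subobj act G Y (h ` B)"
        unfolding strict_morph_def by auto
      define hb where "hb y = h (SOME x. x \<in> B \<and> p x = y)" for y
      have hbp: "hb (p x) = h x" if "x \<in> B" for x
      proof -
        define x' where "x' = (SOME x'. x' \<in> B \<and> p x' = p x)"
        have x': "x' \<in> B \<and> p x' = p x" unfolding x'_def
          by (rule someI[where P="\<lambda>x'. x' \<in> B \<and> p x' = p x", OF conjI[OF that refl]])
        have "x - x' \<in> mker p B" unfolding mker_def
          using x' that submod_diff[OF rm sB] mhom_diff[OF rm C(2) sB] by auto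
        then obtain a where "a \<in> A" "x - x' = f a" using C(4) by auto
        then have "h (x - x') = 0" using h(2) by simp
        then have "h x = h x'" using mhom_diff[OF rm hh sB that] x' by simp
        then show ?thesis unfolding hb_def x'_def by simp
      qed
      have Cp: "\<And>y. y \<in> C \<Longrightarrow> \<exists>x\<in>B. y = p x" using C(3) by blast
      have hhb: "mhom act hb C Y" unfolding mhom_def
      proof (intro conjI ballI allI)
        fix y assume "y \<in> C" then obtain x where "x \<in> B" "y = p x" using Cp by blast
        then show "hb y \<in> Y" using hbp mhom_into[OF hh] by simp
      next
        fix y z assume "y \<in> C" "z \<in> C"
        then obtain x u where "x \<in> B" "y = p x" "u \<in> B" "z = p u" using Cp by blast
        then show "hb (y + z) = hb y + hb z"
          using hbp mhom_add[OF hh] mhom_add[OF C(2)] submod_add[OF sB] by metis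
      next
        fix y l assume "y \<in> C" then obtain x where "x \<in> B" "y = p x" using Cp by blast
        then show "hb (act y l) = act (hb y) l"
          using hbp mhom_act[OF hh] mhom_act[OF C(2)] submod_act[OF sB] by metis
      qed
      have imhb: "hb ` C = h ` B" using hbp C(3) by force
      have kerhb: "mker hb C = p ` mker h B"
        using hbp C(3) unfolding mker_def by force
      have hpK: "mhom act p (mker h B) C" using C(2) unfolding mhom_def mker_def by auto
      have GKhb: "G (mker hb C)" unfolding kerhb by (rule GQ[OF GKh hpK])
      have sKhb: "strict_subobj act G C (mker hb C)"
        unfolding strict_subobj_def
      proof (intro conjI allI impI)
        show "subobj act G C (mker hb C)" unfolding subobj_def
          using GKhb sm[OF GKhb] unfolding mker_def by auto
      next
        fix B' assume B': "subobj act G C B'"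
        then have GB': "G B'" and B'C: "B' \<subseteq> C" and sB': "submod act B'" unfolding subobj_def by auto
        let ?M = "{x\<in>B. p x \<in> B'}"
        have sM: "submod act ?M" by (rule preimage_submod[OF rm C(2) sB sB'])
        have fgM: "fgmod act ?M"
          by (rule extension_fg[OF rm tcG[OF GB'] _ sB C(2)])
             (use B'C C(3) C(4) tcG[OF GI] in auto)
        have fAM: "f ` A \<subseteq> ?M"
        proof
          fix y assume "y \<in> f ` A" then have "y \<in> mker p B" using C(4) by simp
          then show "y \<in> ?M" using submod_0[OF sB'] unfolding mker_def by simp
        qed
        have hi: "mhom act (\<lambda>x. x) (f ` A) ?M"
          using fAM unfolding mhom_def by auto
        have hpM: "mhom act p ?M B'" using C(2) unfolding mhom_def by auto
        have pM: "p ` ?M = B'" using B'C C(3) by auto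
        have kM: "(\<lambda>x. x) ` (f ` A) = mker p ?M"
        proof -
          have "mker p ?M = mker p B" unfolding mker_def using submod_0[OF sB'] by auto
          then show ?thesis using C(4) by simp
        qed
        have GM: "G ?M" by (rule tcE[OF GI GB' fgM hi _ hpM pM kM]) simp
        have "subobj act G B ?M" unfolding subobj_def using sM GM by auto
        then have GKM: "G (mker h B \<inter> ?M)" using sKh unfolding strict_subobj_def by blast
        have hpKM: "mhom act p (mker h B \<inter> ?M) C" using C(2) unfolding mhom_def by auto
        have "p ` (mker h B \<inter> ?M) = p ` mker h B \<inter> B'" by (auto simp: mker_def)
        then have "p ` (mker h B \<inter> ?M) = mker hb C \<inter> B'" using kerhb by simp
        then show "G (mker hb C \<inter> B')" using GQ[OF GKM hpKM] by simp
      qed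
      have "strict_morph act G hb C Y" unfolding strict_morph_def
        using GC GY hhb GKhb sKhb sIh imhb by simp
      moreover have "\<forall>hb'. (\<forall>x\<in>B. hb' (p x) = h x) \<longrightarrow> (\<forall>y\<in>C. hb' y = hb y)"
      proof (intro allI impI ballI)
        fix hb' y assume a: "\<forall>x\<in>B. hb' (p x) = h x" and "y \<in> C"
        then obtain x where "x \<in> B" "y = p x" using Cp by blast
        then show "hb' y = hb y" using a hbp by simp
      qed
      moreover have "\<forall>x\<in>B. hb (p x) = h x" using hbp by simp
      ultimately show ?thesis by (intro exI[of _ hb] conjI)
    qed
    show ?thesis
    proof (intro conjI[OF GC] conjI[OF smp] allI impI)
      fix h Y assume a: "strict_morph act G h B Y \<and> (\<forall>x\<in>A. h (f x) = 0)"
      show "\<exists>hb. strict_morph act G hb C Y \<and> (\<forall>x\<in>B. hb (p x) = h x)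
                        \<and> (\<forall>hb'. (\<forall>x\<in>B. hb' (p x) = h x) \<longrightarrow> (\<forall>y\<in>C. hb' y = hb y))"
        by (rule rest) (use a in blast)+
    qed
  qed
  have P3': "\<forall>g X. strict_morph act G g X A \<and> (\<forall>x\<in>X. f (g x) = 0)
          \<longrightarrow> strict_morph act G g X (mker f A)"
  proof (intro allI impI)
    fix g X assume a: "strict_morph act G g X A \<and> (\<forall>x\<in>X. f (g x) = 0)"
    show "strict_morph act G g X (mker f A)" by (rule P3) (use a in blast)+
  qed
  have P4': "\<forall>C p. fgmod act C \<and> mhom act p B C \<and> p ` B = C \<and> mker p B = f ` A
          \<longrightarrow> G C \<and> strict_morph act G p B C
            \<and> (\<forall>h Y. strict_morph act G h B Y \<and> (\<forall>x\<in>A. h (f x) = 0)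
                 \<longrightarrow> (\<exists>hb. strict_morph act G hb C Y \<and> (\<forall>x\<in>B. hb (p x) = h x)
                        \<and> (\<forall>hb'. (\<forall>x\<in>B. hb' (p x) = h x) \<longrightarrow> (\<forall>y\<in>C. hb' y = hb y))))"
  proof (intro allI impI)
    fix C p assume a: "fgmod act C \<and> mhom act p B C \<and> p ` B = C \<and> mker p B = f ` A"
    show "G C \<and> strict_morph act G p B C
            \<and> (\<forall>h Y. strict_morph act G h B Y \<and> (\<forall>x\<in>A. h (f x) = 0)
                 \<longrightarrow> (\<exists>hb. strict_morph act G hb C Y \<and> (\<forall>x\<in>B. hb (p x) = h x)
                        \<and> (\<forall>hb'. (\<forall>x\<in>B. hb' (p x) = h x) \<longrightarrow> (\<forall>y\<in>C. hb' y = hb y))))"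
      by (rule P4) (use a in blast)+
  qed
  show ?thesis using GK P2 P3' P4' by (intro conjI)
qed
end
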